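(* Let $q$ be a prime power and $n=q^4-1$. Let $x$ be the minimal representative of a cyclotomic coset $I_x$ of cardinality $2$ with $(q^4-1)/(q+1)<x<q^3+q$. Then $I_x$ is an SR-asymmetric coset. Furthermore, the interlude $[(q^4-1)/(q+1),\,q^3+q]_M=[(q-1,0,q-1,0),(0,1,0,1)]_M$ contains exactly $q^2-q$ minimal representatives of SR-asymmetric cosets.
   Context: Identify $\mathbb{Z}_n$ with $\{0,\ldots,n-1\}$, all arithmetic modulo $n$. The $q$-adic 4-tuple $(a_0,a_1,a_2,a_3)$ denotes $a_0+a_1q+a_2q^2+a_3q^3$ with $0\le a_i<q$. The cyclotomic coset of $x$ with respect to $q^2$ is $I_x=\{x,\,q^2x\bmod n\}$; its minimal representative is its least element. The (Hermitian) reciprocal coset of $I_x$ is $I_{n-qx}$. $I_x$ is symmetric if $I_{n-qx}=I_x$ and asymmetric otherwise; for an asymmetric pair with minimal representatives $x<y$, $I_x$ is FR-asymmetric and $I_y$ is SR-asymmetric. The interlude $[(q-1,0,q-1,0),(0,1,0,1)]_M$ is the set of integers $x$ with $(q-1,0,q-1,0)<x<(0,1,0,1)$ and $x<q^2x\bmod n$ (i.e. minimal representatives of cosets of cardinality $2$ in that range). *)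

theory Defs
  imports "HOL-Computational_Algebra.Primes"
begin

definition qadic4 :: "nat \<Rightarrow> nat \<Rightarrow> nat \<Rightarrow> nat \<Rightarrow> nat \<Rightarrow> nat" where
  "qadic4 q a0 a1 a2 a3 = a0 + a1 * q + a2 * q^2 + a3 * q^3"

definition coset :: "nat \<Rightarrow> nat \<Rightarrow> nat \<Rightarrow> nat set" where
  "coset q n x = {x, (q^2 * x) mod n}"

(* representative n - q x (mod n) of the Hermitian reciprocal coset I_{n-qx} *)
definition recip :: "nat \<Rightarrow> nat \<Rightarrow> nat \<Rightarrow> nat" where
  "recip q n x = (n - (q * x) mod n) mod n"

definition symmetric_coset :: "nat \<Rightarrow> nat \<Rightarrow> nat \<Rightarrow> bool" where
  "symmetric_coset q n x \<longleftrightarrow> coset q n (recip q n x) = coset q n x"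

definition SR_asymmetric :: "nat \<Rightarrow> nat \<Rightarrow> nat \<Rightarrow> bool" where
  "SR_asymmetric q n x \<longleftrightarrow> \<not> symmetric_coset q n x \<and>
     Min (coset q n (recip q n x)) < Min (coset q n x)"

definition interlude :: "nat \<Rightarrow> nat \<Rightarrow> nat \<Rightarrow> nat \<Rightarrow> nat set" where
  "interlude q n a b = {x. a < x \<and> x < b \<and> x < (q^2 * x) mod n}"

end

theory Submission
  imports Defs
begin

lemma mod_eqI': "(a::nat) = b * n + r \<Longrightarrow> r < n \<Longrightarrow> a mod n = r"
  by simp

lemma i1: "(X::int) + Q^2 = Q^3 + M \<Longrightarrow> Q^2*X = (Q-1)*(Q^4-1) + (M*Q^2+Q-1)"
proof -
  assume "X + Q^2 = Q^3 + M"
  hence "X = Q^3 + M - Q^2" by simp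
  thus ?thesis by algebra
qed

lemma i2: "(X::int) + Q^2 = Q^3 + M \<Longrightarrow> Q*X = Q^4 - Q^3 + M*Q"
proof -
  assume "X + Q^2 = Q^3 + M"
  hence "X = Q^3 + M - Q^2" by simp
  thus ?thesis by algebra
qed

lemma aux: "(a::nat) \<le> d - b \<Longrightarrow> c < b \<Longrightarrow> 1 \<le> c \<Longrightarrow> b \<le> d \<Longrightarrow> n = d - 1 \<Longrightarrow> a + c - 1 < n"
  by linarith

lemma regA:
  fixes q n x :: nat
  assumes q: "q \<ge> 2" and n: "n = q^4 - 1" and l: "q^3 - q^2 + q \<le> x" and u: "x < q^3"
  shows "x < (q^2*x) mod n"
    and "recip q n x < x"
proof -
  have q2: "q^2 \<le> q^3" using q by (simp add: power_increasing)
  define m where "m = x + q^2 - q^3"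
  have xm: "x + q^2 = q^3 + m" using l q2 unfolding m_def by linarith
  have mq: "q \<le> m" using l q2 xm by linarith
  have mu: "m < q^2" using u xm by linarith
  have m1: "m \<le> q^2 - 1" using mu by linarith
  have q4: "q^4 \<ge> 1" using q by simp
  have mq2: "m*q^2 \<le> q^4 - q^2"
  proof -
    have "m*q^2 \<le> (q^2-1)*q^2" using m1 by simp
    also have "\<dots> = q^2*q^2 - q^2" by (simp add: diff_mult_distrib)
    also have "q^2*q^2 = q^4" by (simp flip: power_add)
    finally show ?thesis .
  qed
  have q1: "1 \<le> q" using q by simp
  have q2q: "q < q^2" using q by (simp add: power2_eq_square)
  have q22: "q^2 \<le> q^4" using q by (simp add: power_increasing)
  have R: "m*q^2 + q - 1 < n" using aux[OF mq2 q2q q1 q22 n] .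
  have xmi: "int x + int q^2 = int q^3 + int m" using xm by (metis of_nat_add of_nat_power)
  have ni: "int n = int q^4 - 1" using n q4 by (simp add: of_nat_diff)
  have eq: "int (q^2*x) = int ((q-1)*n + (m*q^2 + q - 1))"
  proof -
    have a: "int (q-1) = int q - 1" using q by simp
    have b: "int (m*q^2 + q - 1) = int m * int q^2 + int q - 1" using q by (simp add: of_nat_diff)
    show ?thesis using i1[OF xmi] ni a b by simp
  qed
  hence eq': "q^2*x = (q-1)*n + (m*q^2 + q - 1)" by (simp only: of_nat_eq_iff)
  have A: "(q^2*x) mod n = m*q^2 + q - 1"
    using mod_eqI'[OF eq' R] .
  have "q^3 \<le> m*q^2" using mq by (simp add: power_numeral_reduce)
  thus "x < (q^2*x) mod n" using A u q1 by linarith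
  have mqb: "m*q + q \<le> q^3"
  proof -
    have "(m+1)*q \<le> q^2*q" using mu by (intro mult_right_mono) auto
    thus ?thesis by (simp add: power_numeral_reduce algebra_simps)
  qed
  have eq2: "int (q*x) = int q^4 - int q^3 + int m * int q"
    using i2[OF xmi] by simp
  have mqbi: "int m * int q + int q \<le> int q^3" using mqb by (metis of_nat_le_iff of_nat_add of_nat_mult of_nat_power)
  have "int (q*x) < int n" using eq2 mqbi ni q by linarith
  hence qxn: "q*x < n" by (simp only: of_nat_less_iff)
  have pos: "0 < q*x" using q u l q2q by (metis add_cancel_right_left bot_nat_0.not_eq_extremum diff_diff_cancel diff_is_0_eq' le_add2 le_trans mult_is_0 nat_neq_iff not_numeral_le_zero q2 zero_less_diff)
  have rc: "recip q n x = n - q*x" unfolding recip_def using qxn pos by simp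
  have ri: "int (recip q n x) = int q^3 - 1 - int m * int q" using rc eq2 qxn ni by (simp add: of_nat_diff)
  have "q^2 \<le> m*q" using mq by (simp add: power2_eq_square)
  hence "int q^2 \<le> int m * int q" by (metis of_nat_le_iff of_nat_mult of_nat_power)
  hence "int q^3 - 1 - int m * int q < int x" using xmi by linarith
  thus "recip q n x < x" using ri by linarith
qed

lemma regB:
  fixes q n x :: nat
  assumes q: "q \<ge> 2" and n: "n = q^4 - 1" and l: "q^3 \<le> x" and u: "x < q^3 + q"
  shows "(q^2*x) mod n < x"
proof -
  define a where "a = x - q^3"
  have xa: "x = q^3 + a" using l a_def by simp
  have aq: "a + 1 \<le> q" using u xa by simp
  have q4: "q^4 \<ge> 1" using q by simp
  have ni: "int n = int q^4 - 1" using n q4 by (simp add: of_nat_diff)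
  have "int (q^2*x) = int q * (int q^4 - 1) + (int q + int a * int q^2)"
    using xa by (simp add: algebra_simps power_numeral_reduce)
  hence eq: "q^2*x = q*n + (q + a*q^2)" using ni
    by (metis (no_types, lifting) of_nat_add of_nat_eq_iff of_nat_mult of_nat_power)
  have b: "(a+1)*q^2 \<le> q*q^2" using aq by (intro mult_right_mono) auto
  have c: "q < q^2" using q by (simp add: power2_eq_square)
  have b2: "q*q^2 = q^3" by (simp add: power_numeral_reduce)
  have b3: "(a+1)*q^2 = a*q^2 + q^2" by (simp add: distrib_right)
  have "q + a*q^2 < q^3" using b b2 b3 c by linarith
  moreover have "q^3 < n"
  proof -
    have "2*q^3 \<le> q*q^3" using q by (intro mult_right_mono) auto
    moreover have "q*q^3 = q^4" by (simp add: power_numeral_reduce)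
    moreover have "q^3 \<ge> 2" using q c b2 by (metis le_trans less_imp_le_nat mult_le_mono power_increasing one_le_numeral numeral_le_iff semiring_norm(72) le_numeral_extra(4) power_one_right)
    ultimately show ?thesis using n by linarith
  qed
  ultimately have "(q^2*x) mod n = q + a*q^2" using eq by (simp add: mult.commute)
  thus ?thesis using \<open>q + a*q^2 < q^3\<close> l by linarith
qed

lemma SRI:
  assumes "x = Min (coset q n x)" "recip q n x < x"
  shows "SR_asymmetric q n x"
proof -
  have "Min (coset q n (recip q n x)) \<le> recip q n x" by (simp add: coset_def)
  hence lt: "Min (coset q n (recip q n x)) < Min (coset q n x)" using assms by linarith
  hence "\<not> symmetric_coset q n x" unfolding symmetric_coset_def by auto
  thus ?thesis using lt unfolding SR_asymmetric_def by simp
qed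

theorem mainTheorem14:
  fixes p k q n :: nat
  assumes "prime p" and "k \<ge> 1" and "q = p ^ k" and "n = q ^ 4 - 1"
  shows "(\<forall>x. x < n \<and> x = Min (coset q n x) \<and> card (coset q n x) = 2 \<and>
            (q ^ 4 - 1) div (q + 1) < x \<and> x < q ^ 3 + q \<longrightarrow> SR_asymmetric q n x)
      \<and> (q ^ 4 - 1) div (q + 1) = qadic4 q (q - 1) 0 (q - 1) 0
      \<and> q ^ 3 + q = qadic4 q 0 1 0 1
      \<and> card {x \<in> interlude q n (qadic4 q (q - 1) 0 (q - 1) 0) (qadic4 q 0 1 0 1).
                SR_asymmetric q n x} = q ^ 2 - q"
proof -
  have p2: "p \<ge> 2" using assms(1) by (simp add: prime_ge_2_nat)
  have "p \<le> p^k" using assms(2) p2 by (metis One_nat_def le_trans less_imp_le_nat one_less_numeral_iff power_increasing power_one_right semiring_norm(76))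
  hence q: "q \<ge> 2" using p2 assms(3) by linarith
  have n: "n = q^4 - 1" by fact
  have q23: "q^2 \<le> q^3" using q by (simp add: power_increasing)
  have qq2: "q < q^2" using q by (simp add: power2_eq_square)
  define L where "L = q^3 - q^2 + q - 1"
  have e: "L + q^2 + 1 = q^3 + q" unfolding L_def using q23 q by linarith
  have "int (L + q^2 + 1) = int (q^3 + q)" using e by simp
  hence Li: "int L = int q^3 - int q^2 + int q - 1" by simp
  have "int (q^4 - 1) = int ((q+1)*L)"
  proof -
    have "q^4 \<ge> 1" using q by simp
    hence "int (q^4 - 1) = int q^4 - 1" by (simp add: of_nat_diff)
    also have "\<dots> = (int q + 1) * (int q^3 - int q^2 + int q - 1)" by algebra
    also have "\<dots> = int ((q+1)*L)" unfolding of_nat_mult Li by simp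
    finally show ?thesis .
  qed
  hence E: "q^4 - 1 = (q+1)*L" by (simp only: of_nat_eq_iff)
  have "(q^4 - 1) div (q+1) = ((q+1)*L) div (q+1)" by (simp only: E)
  also have "\<dots> = L" by (rule nonzero_mult_div_cancel_left) simp
  finally have D: "(q^4 - 1) div (q+1) = L" .
  have "int (qadic4 q (q - 1) 0 (q - 1) 0) = (int q - 1) + (int q - 1) * int q^2"
    unfolding qadic4_def using q by (simp add: of_nat_diff)
  also have "\<dots> = int L" using Li by algebra
  finally have Q1: "qadic4 q (q - 1) 0 (q - 1) 0 = L" by (simp only: of_nat_eq_iff)
  have Q2: "qadic4 q 0 1 0 1 = q^3 + q" unfolding qadic4_def by simp
  have L1: "q^3 - q^2 + q = L + 1" using e q23 by linarith
  have LL: "\<And>x. L < x \<longleftrightarrow> q^3 - q^2 + q \<le> x" unfolding L1 by auto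
  have minle: "\<And>x. Min (coset q n x) \<le> (q^2*x) mod n" by (simp add: coset_def)
  have P1: "\<forall>x. x < n \<and> x = Min (coset q n x) \<and> card (coset q n x) = 2 \<and>
            (q ^ 4 - 1) div (q + 1) < x \<and> x < q ^ 3 + q \<longrightarrow> SR_asymmetric q n x"
  proof (intro allI impI)
    fix x assume h: "x < n \<and> x = Min (coset q n x) \<and> card (coset q n x) = 2 \<and>
            (q ^ 4 - 1) div (q + 1) < x \<and> x < q ^ 3 + q"
    hence l: "q^3 - q^2 + q \<le> x" using D LL by auto
    show "SR_asymmetric q n x"
    proof (cases "x < q^3")
      case True
      show ?thesis using SRI regA(2)[OF q n l True] h by blast
    next
      case False
      hence "(q^2*x) mod n < x" using regB[OF q n] h by simp
      thus ?thesis using minle[of x] h by linarith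
    qed
  qed
  have S: "{x \<in> interlude q n (qadic4 q (q - 1) 0 (q - 1) 0) (qadic4 q 0 1 0 1).
                SR_asymmetric q n x} = {q^3 - q^2 + q..<q^3}"
  proof (intro set_eqI iffI)
    fix x assume "x \<in> {x \<in> interlude q n (qadic4 q (q - 1) 0 (q - 1) 0) (qadic4 q 0 1 0 1).
                SR_asymmetric q n x}"
    hence h: "L < x" "x < q^3 + q" "x < (q^2*x) mod n" unfolding interlude_def Q1 Q2 by auto
    have "x < q^3"
    proof (rule ccontr)
      assume "\<not> x < q^3"
      hence "(q^2*x) mod n < x" using regB[OF q n] h by simp
      thus False using h by linarith
    qed
    thus "x \<in> {q^3 - q^2 + q..<q^3}" using h LL by auto
  next
    fix x assume "x \<in> {q^3 - q^2 + q..<q^3}"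
    hence l: "q^3 - q^2 + q \<le> x" and u: "x < q^3" by auto
    have i: "x < (q^2*x) mod n" using regA(1)[OF q n l u] .
    hence "Min (coset q n x) = x" unfolding coset_def by (simp add: min_def)
    hence "SR_asymmetric q n x" using SRI regA(2)[OF q n l u] by metis
    thus "x \<in> {x \<in> interlude q n (qadic4 q (q - 1) 0 (q - 1) 0) (qadic4 q 0 1 0 1).
                SR_asymmetric q n x}" unfolding interlude_def Q1 Q2 using i l u LL by auto
  qed
  have C: "card {q^3 - q^2 + q..<q^3} = q^2 - q" using q23 qq2 by simp
  show ?thesis using P1 D Q1 Q2 S C by simp
qed

end
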